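(* Let $n\ge 3$, let $C_n$ be the cycle on vertices $1,\dots,n$ in cyclic order, and let $\Delta$ be its distance squared matrix, a circulant matrix whose first row is $(c_1,\dots,c_n)$ with $c_1=0$ and $c_i=c_{n+2-i}=(i-1)^2$ for $2\le i\le \lfloor n/2\rfloor+1$. For $j=1,\dots,n$ let $\lambda_j=\sum_{i=1}^n c_i\,\omega^{(i-1)j}$ with $\omega=e^{2\pi \mathrm{i}/n}$ (the eigenvalue of $\Delta$ for the eigenvector $(1,\omega^j,\omega^{2j},\dots,\omega^{(n-1)j})^T$). If $n=2r+1$ is odd, then \[ \lambda_j=2\cos(\pi j)\sum_{k=1}^{r}k^2\cos\!\left(\frac{(n-2k)\pi}{n}j\right) = 2\cos(\pi j)\left(\cos\!\left(\tfrac{(n-2)\pi}{n}j\right)+4\cos\!\left(\tfrac{(n-4)\pi}{n}j\right)+\cdots+\tfrac{(n-1)^2}{4}\cos\!\left(\tfrac{\pi}{n}j\right)\right). \] If $n=2m$ is even, then \[ \lambda_j=2\cos(\pi j)\left(\frac{n^2}{8}+\sum_{k=1}^{m-1}k^2\cos\!\left(\frac{(n-2k)\pi}{n}j\right)\right). \]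
   Context: For a connected graph with vertices $1,\dots,n$, the distance squared matrix is the $n\times n$ matrix with $(i,j)$ entry $d_{ij}^2$, where $d_{ij}$ is the graph distance between $i$ and $j$. *)

theory Defs
  imports "HOL-Analysis.Analysis"
begin

definition cycle_c :: "nat \<Rightarrow> nat \<Rightarrow> real" where
  "cycle_c n i = (if i = 1 then 0
                  else if 2 \<le> i \<and> i \<le> n div 2 + 1 then real ((i - 1)^2)
                  else real ((n + 1 - i)^2))"

definition cycle_Delta :: "nat \<Rightarrow> nat \<Rightarrow> nat \<Rightarrow> real" where
  "cycle_Delta n i j = cycle_c n ((j + n - i) mod n + 1)"

definition cycle_omega :: "nat \<Rightarrow> complex" where
  "cycle_omega n = exp (2 * pi * \<i> / of_nat n)"

definition cycle_lambda :: "nat \<Rightarrow> nat \<Rightarrow> complex" where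
  "cycle_lambda n j = (\<Sum>i=1..n. of_real (cycle_c n i) * cycle_omega n ^ ((i - 1) * j))"

end

theory Submission
  imports Defs
begin

lemma omega_pow: "cycle_omega n ^ a = cis (2*pi*real a/real n)"
  unfolding cycle_omega_def cis_conv_exp exp_of_nat_mult[symmetric]
  by (simp add: algebra_simps)

lemma cos2pij: "cos (2*pi*real j - x) = cos x" "sin (2*pi*real j - x) = - sin x"
proof -
  have c: "cos (2*pi*real j) = 1" using cos_npi[of "2*j"] by (simp add: mult.commute mult.left_commute)
  have s: "sin (2*pi*real j) = 0" using sin_npi[of "2*j"] by (simp add: mult.commute mult.left_commute)
  show "cos (2*pi*real j - x) = cos x" "sin (2*pi*real j - x) = - sin x"
    by (simp_all add: cos_diff sin_diff c s)
qed

lemma lemB: assumes "n > 0" "k \<le> n"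
  shows "cycle_omega n ^ (k*j) + cycle_omega n ^ ((n-k)*j) = of_real (2 * cos (2*pi*real k*real j/real n))"
proof -
  have e: "2*pi*real ((n-k)*j)/real n = 2*pi*real j - 2*pi*real k*real j/real n"
    using assms by (simp add: of_nat_diff field_simps)
  define x where "x = 2*pi*real k*real j/real n"
  have "cis (2*pi*real j - x) = cis (-x)" by (simp add: complex_eq_iff cos2pij)
  moreover have "cis x + cis (-x) = of_real (2 * cos x)" by (simp add: complex_eq_iff)
  moreover have "2*pi*real (k*j)/real n = x" unfolding x_def by simp
  ultimately show ?thesis unfolding omega_pow e x_def[symmetric] by simp
qed

lemma lemA: assumes "n > 0" "2*k \<le> n"
  shows "cos (pi*real j) * cos (real (n - 2*k) * pi / real n * real j) = cos (2*pi*real k*real j/real n)"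
proof -
  have e: "real (n - 2*k) * pi / real n * real j = pi*real j - 2*pi*real k*real j/real n"
    using assms by (simp add: of_nat_diff field_simps)
  have s: "sin (pi*real j) = 0" using sin_npi[of j] by (simp add: mult.commute)
  have c: "cos (pi*real j) * cos (pi*real j) = 1" using cos_npi[of j]
    by (simp add: mult.commute power_mult_distrib[symmetric])
  show ?thesis unfolding e cos_diff s
    by (simp add: mult.assoc[symmetric] c)
qed

lemma lemC: assumes "n = 2*m" "m > 0"
  shows "cycle_omega n ^ (m*j) = of_real (cos (pi*real j))"
proof -
  have e: "2*pi*real (m*j)/real n = pi*real j" using assms by simp
  have s: "sin (pi*real j) = 0" using sin_npi[of j] by (simp add: mult.commute)
  show ?thesis unfolding omega_pow e by (simp add: complex_eq_iff s)
qed

lemma reindex: "cycle_lambda n j = (\<Sum>l<n. of_real (cycle_c n (l+1)) * cycle_omega n ^ (l*j))"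
proof -
  have "{1..n} = {Suc 0..<Suc n}" by auto
  then show ?thesis unfolding cycle_lambda_def
    by (simp only: sum.shift_bounds_Suc_ivl atLeast0LessThan) simp
qed

theorem theorem5p2:
  fixes n j :: nat
  assumes "n \<ge> 3" and "1 \<le> j" and "j \<le> n"
  shows "(\<forall>r. n = 2 * r + 1 \<longrightarrow>
            cycle_lambda n j = of_real (2 * cos (pi * real j) *
              (\<Sum>k=1..r. real k ^ 2 * cos (real (n - 2 * k) * pi / real n * real j))))
       \<and> (\<forall>m. n = 2 * m \<longrightarrow>
            cycle_lambda n j = of_real (2 * cos (pi * real j) *
              (real n ^ 2 / 8 + (\<Sum>k=1..m - 1. real k ^ 2 * cos (real (n - 2 * k) * pi / real n * real j)))))"
proof (intro conjI allI impI)
  define g where "g l = of_real (cycle_c n (l+1)) * cycle_omega n ^ (l*j)" for l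
  have n0: "n > 0" using assms by simp
  have L: "cycle_lambda n j = (\<Sum>l\<in>{1..<n}. g l)"
  proof -
    have "{..<n} = insert 0 {1..<n}" using n0 by auto
    then show ?thesis unfolding reindex g_def[symmetric] by (simp add: g_def cycle_c_def)
  qed
  have reflx: "(\<Sum>l\<in>{a..b}. g l) = (\<Sum>k\<in>{n-b..n-a}. g (n-k))" if "b < n" for a b
    using that by (intro sum.reindex_bij_witness[of _ "\<lambda>k. n-k" "\<lambda>l. n-l"]) auto
  {
    fix r assume r: "n = 2*r+1"
    have U: "{1..<n} = {1..r} \<union> {r+1..2*r}" using r by auto
    have "cycle_lambda n j = (\<Sum>l\<in>{1..r}. g l) + (\<Sum>l\<in>{r+1..2*r}. g l)"
      unfolding L by (simp only: U; subst sum.union_disjoint) auto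
    also have "(\<Sum>l\<in>{r+1..2*r}. g l) = (\<Sum>k\<in>{1..r}. g (n-k))"
      using reflx[of "2*r" "r+1"] r by simp
    also have "(\<Sum>l\<in>{1..r}. g l) + (\<Sum>k\<in>{1..r}. g (n-k)) = (\<Sum>k\<in>{1..r}. g k + g (n-k))"
      by (simp add: sum.distrib)
    also have "\<dots> = (\<Sum>k\<in>{1..r}. of_real (real k ^ 2 * (2 * cos (2*pi*real k*real j/real n))))"
    proof (rule sum.cong)
      fix k assume k: "k \<in> {1..r}"
      have a0: "k+1 \<noteq> 1" "2 \<le> k+1 \<and> k+1 \<le> n div 2 + 1" "k+1-1 = k" using k r by auto
      have c1: "cycle_c n (k+1) = real k ^ 2" unfolding cycle_c_def using a0 by (simp only: if_False if_True) simp
      have a1: "n-k+1 \<noteq> 1" "\<not> (n-k+1 \<le> n div 2 + 1)" "n+1-(n-k+1) = k" using k r by auto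
      have c2: "cycle_c n (n-k+1) = real k ^ 2" unfolding cycle_c_def using a1 by simp
      show "g k + g (n-k) = of_real (real k ^ 2 * (2 * cos (2*pi*real k*real j/real n)))"
        unfolding g_def c1 c2 using lemB[OF n0, of k j] a1(3)
        by (simp add: distrib_left[symmetric])
    qed simp
    also have "\<dots> = of_real (2 * cos (pi * real j) *
              (\<Sum>k=1..r. real k ^ 2 * cos (real (n - 2 * k) * pi / real n * real j)))"
      unfolding of_real_sum[symmetric] sum_distrib_left
      by (intro arg_cong[where f=of_real] sum.cong refl) (use lemA[OF n0] r in auto)
    finally show "cycle_lambda n j = of_real (2 * cos (pi * real j) *
              (\<Sum>k=1..r. real k ^ 2 * cos (real (n - 2 * k) * pi / real n * real j)))" .
  }
  {
    fix m assume m: "n = 2*m"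
    have m0: "m > 0" using m assms by simp
    have U: "{1..<n} = {1..m-1} \<union> insert m {m+1..2*m-1}" using m m0 by auto
    have "cycle_lambda n j = (\<Sum>l\<in>{1..m-1}. g l) + (g m + (\<Sum>l\<in>{m+1..2*m-1}. g l))"
      unfolding L by (simp only: U; subst sum.union_disjoint) auto
    also have "(\<Sum>l\<in>{m+1..2*m-1}. g l) = (\<Sum>k\<in>{1..m-1}. g (n-k))"
      using reflx[of "2*m-1" "m+1"] m m0 by simp
    also have "g m = of_real (real m ^ 2 * cos (pi * real j))"
    proof -
      have a2: "m+1 \<noteq> 1" "2 \<le> m+1 \<and> m+1 \<le> n div 2 + 1" "m+1-1 = m" using m m0 by auto
      have "cycle_c n (m+1) = real m ^ 2" unfolding cycle_c_def using a2 by (simp only: if_False if_True) simp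
      then show ?thesis unfolding g_def lemC[OF m m0, of j] by simp
    qed
    also have "(\<Sum>l\<in>{1..m-1}. g l) + (of_real (real m ^ 2 * cos (pi * real j)) + (\<Sum>k\<in>{1..m-1}. g (n-k)))
       = of_real (real m ^ 2 * cos (pi * real j)) + (\<Sum>k\<in>{1..m-1}. g k + g (n-k))"
      by (simp add: sum.distrib)
    also have "(\<Sum>k\<in>{1..m-1}. g k + g (n-k)) = (\<Sum>k\<in>{1..m-1}. of_real (real k ^ 2 * (2 * cos (2*pi*real k*real j/real n))))"
    proof (rule sum.cong)
      fix k assume k: "k \<in> {1..m-1}"
      have a0: "k+1 \<noteq> 1" "2 \<le> k+1 \<and> k+1 \<le> n div 2 + 1" "k+1-1 = k" using k m by auto
      have c1: "cycle_c n (k+1) = real k ^ 2" unfolding cycle_c_def using a0 by (simp only: if_False if_True) simp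
      have a1: "n-k+1 \<noteq> 1" "\<not> (n-k+1 \<le> n div 2 + 1)" "n+1-(n-k+1) = k" using k m by auto
      have c2: "cycle_c n (n-k+1) = real k ^ 2" unfolding cycle_c_def using a1 by simp
      show "g k + g (n-k) = of_real (real k ^ 2 * (2 * cos (2*pi*real k*real j/real n)))"
        unfolding g_def c1 c2 using lemB[OF n0, of k j] a1(3)
        by (simp add: distrib_left[symmetric])
    qed simp
    also have "of_real (real m ^ 2 * cos (pi * real j)) + \<dots> = of_real (2 * cos (pi * real j) *
              (real n ^ 2 / 8 + (\<Sum>k=1..m - 1. real k ^ 2 * cos (real (n - 2 * k) * pi / real n * real j))))"
    proof -
      have "(\<Sum>k=1..m - 1. 2 * cos (pi * real j) * (real k ^ 2 * cos (real (n - 2 * k) * pi / real n * real j)))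
           = (\<Sum>k=1..m - 1. real k ^ 2 * (2 * cos (2*pi*real k*real j/real n)))"
      proof (intro sum.cong refl)
        fix k assume "k \<in> {1..m-1}"
        then have "2*k \<le> n" using m by auto
        from lemA[OF n0 this, of j] show "2 * cos (pi * real j) * (real k ^ 2 * cos (real (n - 2 * k) * pi / real n * real j))
           = real k ^ 2 * (2 * cos (2*pi*real k*real j/real n))" by (simp add: algebra_simps)
      qed
      moreover have "2 * cos (pi * real j) * (real n ^ 2 / 8) = real m ^ 2 * cos (pi * real j)"
        using m by (simp add: power2_eq_square)
      ultimately show ?thesis
        unfolding of_real_sum[symmetric] of_real_add[symmetric] distrib_left sum_distrib_left
        by simp
    qed
    finally show "cycle_lambda n j = of_real (2 * cos (pi * real j) *
              (real n ^ 2 / 8 + (\<Sum>k=1..m - 1. real k ^ 2 * cos (real (n - 2 * k) * pi / real n * real j))))" .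
  }
qed
end
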